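(* Let $\xi$ be an $(I,T)$-system with the stuttering property, and let $n\ge 0$. Then $d(I,T) \leq n$ if and only if the formula $I(S_1)$ is redundant in $\exists S_0\cdots\exists S_n\,[\,I(S_0)\wedge I(S_1) \wedge T_{0,1}\wedge\dots\wedge T_{n,n+1}\,]$, i.e. if and only if $$\exists S_0\cdots\exists S_n\,[\,I(S_0)\wedge T_{0,1}\wedge\dots\wedge T_{n,n+1}\,] \;\equiv\; \exists S_0\cdots\exists S_n\,[\,I(S_0)\wedge I(S_1)\wedge T_{0,1}\wedge\dots\wedge T_{n,n+1}\,]$$ as Boolean functions of $S_{n+1}$.
   Context: An $(I,T)$-system is a transition system over a finite set $S$ of Boolean state variables, given by a propositional formula $I(S)$ (initial states) and a propositional formula $T(S,S')$ (transition relation), where $S'$ is a copy of $S$. A state is a complete assignment to $S$. A trace $(s_0,\dots,s_k)$ is valid if $I(s_0)=1$ and $T(s_i,s_{i+1})=1$ for $i=0,\dots,k-1$; then $s_k$ is reachable in $k$ transitions. The system has the stuttering property if $T(s,s)=1$ for every state $s$. The reachability diameter $d(I,T)$ is the smallest $n\ge0$ such that every state reachable in some number of transitions is reachable in at most $n$ transitions. Notation: $S_j$ is a copy of the state variables for time frame $j$; $T_{j,j+1}$ denotes $T(S_j,S_{j+1})$; $I(S_0)$, $I(S_1)$ are copies of $I$ over $S_0$, $S_1$. A conjunct $A$ is redundant in $\exists W[A\wedge B]$ if $\exists W[A\wedge B]\equiv\exists W[B]$, where $\equiv$ means equality as Boolean functions of the free variables. *)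

theory Defs
  imports Main
begin

text \<open>States are complete assignments to a finite set of Boolean state variables,
  modelled as functions from a finite type of variables to bool.
  The formulas I(S) and T(S,S') are represented by the Boolean functions they denote.\<close>

type_synonym 'v state = "'v \<Rightarrow> bool"

definition stuttering :: "('v state \<Rightarrow> 'v state \<Rightarrow> bool) \<Rightarrow> bool" where
  "stuttering T \<longleftrightarrow> (\<forall>s. T s s)"

definition reachable_in :: "('v state \<Rightarrow> bool) \<Rightarrow> ('v state \<Rightarrow> 'v state \<Rightarrow> bool) \<Rightarrow> nat \<Rightarrow> 'v state \<Rightarrow> bool" where
  "reachable_in I T k s \<longleftrightarrow>
     (\<exists>tr :: nat \<Rightarrow> 'v state. I (tr 0) \<and> (\<forall>i<k. T (tr i) (tr (Suc i))) \<and> tr k = s)"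

definition reachable :: "('v state \<Rightarrow> bool) \<Rightarrow> ('v state \<Rightarrow> 'v state \<Rightarrow> bool) \<Rightarrow> 'v state \<Rightarrow> bool" where
  "reachable I T s \<longleftrightarrow> (\<exists>k. reachable_in I T k s)"

definition diameter :: "('v state \<Rightarrow> bool) \<Rightarrow> ('v state \<Rightarrow> 'v state \<Rightarrow> bool) \<Rightarrow> nat" where
  "diameter I T = (LEAST n. \<forall>s. reachable I T s \<longrightarrow> (\<exists>k\<le>n. reachable_in I T k s))"

end

theory Submission
  imports Defs
begin

lemma reach_step:
  assumes "reachable_in I T k s" "T s t"
  shows "reachable_in I T (Suc k) t"
proof -
  obtain tr where tr: "I (tr 0)" "\<forall>i<k. T (tr i) (tr (Suc i))" "tr k = s"
    using assms(1) unfolding reachable_in_def by blast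
  let ?tr = "tr(Suc k := t)"
  have "I (?tr 0)" using tr by simp
  moreover have "\<forall>i<Suc k. T (?tr i) (?tr (Suc i))"
    using tr assms(2) by (auto simp: less_Suc_eq)
  ultimately show ?thesis unfolding reachable_in_def by (intro exI[of _ ?tr]) simp
qed

lemma reach_back:
  assumes "reachable_in I T (Suc k) t"
  shows "\<exists>s. reachable_in I T k s \<and> T s t"
proof -
  obtain tr where tr: "I (tr 0)" "\<forall>i<Suc k. T (tr i) (tr (Suc i))" "tr (Suc k) = t"
    using assms unfolding reachable_in_def by blast
  have "reachable_in I T k (tr k)" unfolding reachable_in_def using tr by auto
  moreover have "T (tr k) t" using tr by auto
  ultimately show ?thesis by blast
qed

lemma reach_mono:
  assumes "stuttering T" "reachable_in I T k s" "k \<le> m"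
  shows "reachable_in I T m s"
  using assms(3,2)
proof (induction m)
  case 0 then show ?case by simp
next
  case (Suc m)
  show ?case
  proof (cases "k = Suc m")
    case True then show ?thesis using Suc by simp
  next
    case False
    then have "reachable_in I T m s" using Suc by simp
    then show ?thesis using reach_step assms(1) unfolding stuttering_def by blast
  qed
qed

lemma A_iff:
  "(\<exists>S :: nat \<Rightarrow> 'v state. S (Suc n) = x \<and> I (S 0) \<and> (\<forall>i\<le>n. T (S i) (S (Suc i))))
   \<longleftrightarrow> reachable_in I T (Suc n) x"
  unfolding reachable_in_def by (auto simp: less_Suc_eq_le)

lemma B_iff:
  assumes "stuttering T"
  shows "(\<exists>S :: nat \<Rightarrow> 'v state. S (Suc n) = x \<and> I (S 0) \<and> I (S 1) \<and> (\<forall>i\<le>n. T (S i) (S (Suc i))))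
   \<longleftrightarrow> reachable_in I T n x"
proof
  assume "\<exists>S :: nat \<Rightarrow> 'v state. S (Suc n) = x \<and> I (S 0) \<and> I (S 1) \<and> (\<forall>i\<le>n. T (S i) (S (Suc i)))"
  then obtain S :: "nat \<Rightarrow> 'v state" where S: "S (Suc n) = x" "I (S 1)" "\<forall>i\<le>n. T (S i) (S (Suc i))" by blast
  show "reachable_in I T n x" unfolding reachable_in_def
    using S by (intro exI[of _ "\<lambda>i. S (Suc i)"]) auto
next
  assume "reachable_in I T n x"
  then obtain tr where tr: "I (tr 0)" "\<forall>i<n. T (tr i) (tr (Suc i))" "tr n = x"
    unfolding reachable_in_def by blast
  define S where "S = (\<lambda>i. case i of 0 \<Rightarrow> tr 0 | Suc j \<Rightarrow> tr j)"
  have "\<forall>i\<le>n. T (S i) (S (Suc i))"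
  proof (intro allI impI)
    fix i assume "i \<le> n"
    show "T (S i) (S (Suc i))"
    proof (cases i)
      case 0 then show ?thesis using assms unfolding S_def stuttering_def by simp
    next
      case (Suc j) then show ?thesis using tr \<open>i \<le> n\<close> unfolding S_def by simp
    qed
  qed
  then show "\<exists>S :: nat \<Rightarrow> 'v state. S (Suc n) = x \<and> I (S 0) \<and> I (S 1) \<and> (\<forall>i\<le>n. T (S i) (S (Suc i)))"
    using tr by (intro exI[of _ S]) (auto simp: S_def)
qed

lemma diam_exists:
  fixes I :: "('v::finite) state \<Rightarrow> bool"
  shows "\<exists>N. \<forall>s. reachable I T s \<longrightarrow> (\<exists>k\<le>N. reachable_in I T k s)"
proof -
  let ?R = "{s :: 'v state. reachable I T s}"
  define f where "f s = (LEAST k. reachable_in I T k s)" for s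
  have fin: "finite ?R" by simp
  have "\<forall>s. reachable I T s \<longrightarrow> (\<exists>k\<le>Max (f ` ?R). reachable_in I T k s)"
  proof (intro allI impI)
    fix s assume r: "reachable I T s"
    then have "reachable_in I T (f s) s" unfolding f_def reachable_def by (metis LeastI)
    moreover have "f s \<le> Max (f ` ?R)" using fin r by (intro Max_ge) auto
    ultimately show "\<exists>k\<le>Max (f ` ?R). reachable_in I T k s" by blast
  qed
  then show ?thesis by blast
qed

theorem proposition1:
  fixes I :: "('v::finite) state \<Rightarrow> bool"
    and T :: "'v state \<Rightarrow> 'v state \<Rightarrow> bool"
    and n :: nat
  assumes "stuttering T"
  shows "diameter I T \<le> n \<longleftrightarrow>
    (\<forall>x :: 'v state.
       (\<exists>S :: nat \<Rightarrow> 'v state. S (Suc n) = x \<and> I (S 0) \<and> (\<forall>i\<le>n. T (S i) (S (Suc i))))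
       \<longleftrightarrow>
       (\<exists>S :: nat \<Rightarrow> 'v state. S (Suc n) = x \<and> I (S 0) \<and> I (S 1) \<and> (\<forall>i\<le>n. T (S i) (S (Suc i)))))"
  unfolding A_iff B_iff[OF assms]
proof
  assume d: "diameter I T \<le> n"
  have P: "\<forall>s. reachable I T s \<longrightarrow> (\<exists>k\<le>diameter I T. reachable_in I T k s)"
    unfolding diameter_def by (rule LeastI_ex[OF diam_exists])
  show "\<forall>x. reachable_in I T (Suc n) x \<longleftrightarrow> reachable_in I T n x"
  proof (intro allI iffI)
    fix x assume "reachable_in I T (Suc n) x"
    then have "reachable I T x" unfolding reachable_def by blast
    then obtain k where "k \<le> diameter I T" "reachable_in I T k x" using P by blast
    then show "reachable_in I T n x" using reach_mono[OF assms] d by auto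
  next
    fix x assume "reachable_in I T n x"
    then show "reachable_in I T (Suc n) x" using reach_mono[OF assms] by auto
  qed
next
  assume eq: "\<forall>x. reachable_in I T (Suc n) x \<longleftrightarrow> reachable_in I T n x"
  have all: "reachable_in I T k x \<Longrightarrow> reachable_in I T n x" for k x
  proof (induction k arbitrary: x)
    case 0 then show ?case using reach_mono[OF assms] by auto
  next
    case (Suc k)
    then obtain s where s: "reachable_in I T k s" "T s x" using reach_back by blast
    then have "reachable_in I T n s" using Suc by blast
    then have "reachable_in I T (Suc n) x" using reach_step s(2) by blast
    then show ?case using eq by blast
  qed
  have "\<forall>s. reachable I T s \<longrightarrow> (\<exists>k\<le>n. reachable_in I T k s)"
    using all unfolding reachable_def by blast
  then show "diameter I T \<le> n" unfolding diameter_def by (rule Least_le)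
qed

end
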